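(* For every $n\in\{1,\dots,N\}$, the limits $-\lim_{\rho\to\infty}\frac{\log P^{(b)}_n(\rho)}{\log\rho}$ and $-\lim_{\rho\to\infty}\frac{\log P^{c}_n(\rho)}{\log\rho}$ exist and both equal $n(m_h+m_sK)$.
   Context: Fix integers $N\ge1$, $K\ge1$, $b\ge2$ and a real $\beta\in(0,1]$. Let $m_G,m_g,m_h\ge 1/2$ with $m_G\neq m_g$; put $m_s=\min\{m_G,m_g\}$. For $n=1,\dots,N$ and $k=1,\dots,K$ let $h_n,G_k^n,g_k^n$ be mutually independent complex random variables with $|G_k^n|$, $|g_k^n|$, $|h_n|$ having the Nakagami density $f(x)=\frac{2m^m}{\Gamma(m)}x^{2m-1}e^{-mx^2}$ ($x\ge0$) with $m=m_G$, $m_g$, $m_h$ respectively. Let $\Delta=2\pi/2^b$; set $\bar\theta_k^n=\arg(h_n)-\arg(G_k^ng_k^n)$, $\hat\theta_k^n=\Delta(\lfloor\bar\theta_k^n/\Delta\rfloor+\tfrac12)$, $\epsilon_k^n=\hat\theta_k^n-\bar\theta_k^n$. Define $Z^{(n)}=\big||h_n|+\beta\sum_{k=1}^K|G_k^n||g_k^n|e^{j\epsilon_k^n}\big|$ and $Z_c^{(n)}=|h_n|+\beta\sum_{k=1}^K|G_k^n||g_k^n|$; let $Z_1\le\dots\le Z_N$ and $Z_{c,1}\le\dots\le Z_{c,N}$ be their order statistics. NOMA parameters: $\alpha_1>\dots>\alpha_N>0$ with $\sum_n\alpha_n=1$; $\tilde\gamma_l=2^{\tilde R_l}-1$ for target rates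 $\tilde R_l>0$, with $\alpha_l-\tilde\gamma_l\sum_{i=l+1}^N\alpha_i>0$ for $1\le l\le N-1$; transmit SNR $\rho>0$. For $l\le n$ set $\tilde\rho_{n\leftarrow l}=\frac{\tilde\gamma_l}{\rho(\alpha_l-\tilde\gamma_l\sum_{i=l+1}^N\alpha_i)}$ if $(l,n)\neq(N,N)$ and $\tilde\rho_{N\leftarrow N}=\frac{\tilde\gamma_N}{\rho\alpha_N}$; $\tilde\rho_{n,\max}=\max_{1\le l\le n}\tilde\rho_{n\leftarrow l}$. Outage probabilities: $P^{(b)}_n(\rho)=\Pr(Z_n^2<\tilde\rho_{n,\max})$, $P^{c}_n(\rho)=\Pr(Z_{c,n}^2<\tilde\rho_{n,\max})$. *)

theory Defs
  imports "HOL-Probability.Probability"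
begin

definition nakagami_density :: "real \<Rightarrow> real \<Rightarrow> real" where
  "nakagami_density m x =
     (if 0 \<le> x then 2 * m powr m / Gamma m * x powr (2 * m - 1) * exp (- m * x\<^sup>2) else 0)"

definition qstep :: "nat \<Rightarrow> real" where
  "qstep b = 2 * pi / 2 ^ b"

definition qerr :: "nat \<Rightarrow> real \<Rightarrow> real" where
  "qerr b \<theta> = qstep b * (real_of_int \<lfloor>\<theta> / qstep b\<rfloor> + 1/2) - \<theta>"

text \<open>Effective channel gain of one user (h : direct link, G k, g k : the K cascaded links).\<close>
definition Zq :: "nat \<Rightarrow> real \<Rightarrow> nat \<Rightarrow> complex \<Rightarrow> (nat \<Rightarrow> complex) \<Rightarrow> (nat \<Rightarrow> complex) \<Rightarrow> real" where
  "Zq b \<beta> K h G g =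
     cmod (complex_of_real (cmod h) + complex_of_real \<beta> *
       (\<Sum>k=1..K. complex_of_real (cmod (G k) * cmod (g k)) *
                   cis (qerr b (Arg h - Arg (G k * g k)))))"

definition Zcont :: "real \<Rightarrow> nat \<Rightarrow> complex \<Rightarrow> (nat \<Rightarrow> complex) \<Rightarrow> (nat \<Rightarrow> complex) \<Rightarrow> real" where
  "Zcont \<beta> K h G g = cmod h + \<beta> * (\<Sum>k=1..K. cmod (G k) * cmod (g k))"

text \<open>n-th order statistic (n = 1 is the smallest) of f 1, ..., f N.\<close>
definition order_stat :: "nat \<Rightarrow> (nat \<Rightarrow> real) \<Rightarrow> nat \<Rightarrow> real" where
  "order_stat N f n = sort (map f [1..<Suc N]) ! (n - 1)"

definition gam :: "(nat \<Rightarrow> real) \<Rightarrow> nat \<Rightarrow> real" where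
  "gam R l = 2 powr R l - 1"

definition rho_tilde :: "(nat \<Rightarrow> real) \<Rightarrow> (nat \<Rightarrow> real) \<Rightarrow> nat \<Rightarrow> real \<Rightarrow> nat \<Rightarrow> nat \<Rightarrow> real" where
  "rho_tilde \<alpha> R N \<rho> n l =
     (if (l, n) \<noteq> (N, N)
      then gam R l / (\<rho> * (\<alpha> l - gam R l * (\<Sum>i=l+1..N. \<alpha> i)))
      else gam R N / (\<rho> * \<alpha> N))"

definition rho_max :: "(nat \<Rightarrow> real) \<Rightarrow> (nat \<Rightarrow> real) \<Rightarrow> nat \<Rightarrow> real \<Rightarrow> nat \<Rightarrow> real" where
  "rho_max \<alpha> R N \<rho> n = Max ((rho_tilde \<alpha> R N \<rho> n) ` {1..n})"

datatype cidx = CH nat | CG nat nat | Cg nat nat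

definition chan :: "(nat \<Rightarrow> 'a \<Rightarrow> complex) \<Rightarrow> (nat \<Rightarrow> nat \<Rightarrow> 'a \<Rightarrow> complex) \<Rightarrow> (nat \<Rightarrow> nat \<Rightarrow> 'a \<Rightarrow> complex)
                    \<Rightarrow> cidx \<Rightarrow> 'a \<Rightarrow> complex" where
  "chan h G g i = (case i of CH n \<Rightarrow> h n | CG n k \<Rightarrow> G n k | Cg n k \<Rightarrow> g n k)"

definition chan_idx :: "nat \<Rightarrow> nat \<Rightarrow> cidx set" where
  "chan_idx N K = CH ` {1..N} \<union> (\<lambda>(n, k). CG n k) ` ({1..N} \<times> {1..K})
                  \<union> (\<lambda>(n, k). Cg n k) ` ({1..N} \<times> {1..K})"

text \<open>Outage probabilities of user n with b-bit phase quantization and with continuous phases.\<close>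
definition outage_b :: "'a measure \<Rightarrow> nat \<Rightarrow> real \<Rightarrow> nat \<Rightarrow> nat \<Rightarrow>
    (nat \<Rightarrow> 'a \<Rightarrow> complex) \<Rightarrow> (nat \<Rightarrow> nat \<Rightarrow> 'a \<Rightarrow> complex) \<Rightarrow> (nat \<Rightarrow> nat \<Rightarrow> 'a \<Rightarrow> complex) \<Rightarrow>
    (nat \<Rightarrow> real) \<Rightarrow> (nat \<Rightarrow> real) \<Rightarrow> nat \<Rightarrow> real \<Rightarrow> real" where
  "outage_b M b \<beta> K N h G g \<alpha> R n \<rho> =
     measure M {\<omega> \<in> space M.
       (order_stat N (\<lambda>i. Zq b \<beta> K (h i \<omega>) (\<lambda>k. G i k \<omega>) (\<lambda>k. g i k \<omega>)) n)\<^sup>2 < rho_max \<alpha> R N \<rho> n}"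

definition outage_c :: "'a measure \<Rightarrow> real \<Rightarrow> nat \<Rightarrow> nat \<Rightarrow>
    (nat \<Rightarrow> 'a \<Rightarrow> complex) \<Rightarrow> (nat \<Rightarrow> nat \<Rightarrow> 'a \<Rightarrow> complex) \<Rightarrow> (nat \<Rightarrow> nat \<Rightarrow> 'a \<Rightarrow> complex) \<Rightarrow>
    (nat \<Rightarrow> real) \<Rightarrow> (nat \<Rightarrow> real) \<Rightarrow> nat \<Rightarrow> real \<Rightarrow> real" where
  "outage_c M \<beta> K N h G g \<alpha> R n \<rho> =
     measure M {\<omega> \<in> space M.
       (order_stat N (\<lambda>i. Zcont \<beta> K (h i \<omega>) (\<lambda>k. G i k \<omega>) (\<lambda>k. g i k \<omega>)) n)\<^sup>2 < rho_max \<alpha> R N \<rho> n}"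

end

theory Submission
  imports Defs "HOL-Complex_Analysis.Cauchy_Integral_Theorem"
begin


definition nakC :: "real \<Rightarrow> real" where "nakC m = m powr m / (m * Gamma m)"

lemma powr_int_0:
  fixes c a u :: real assumes "a > -1" "u \<ge> 0" "c \<ge> 0"
  shows "(\<integral>\<^sup>+x. ennreal (indicator {0..u} x * (c * x powr a)) \<partial>lborel) = ennreal (c * (u powr (a+1) / (a+1)))"
proof (rule nn_integral_has_integral_lebesgue)
  show "((\<lambda>x. c * x powr a) has_integral c * (u powr (a+1)/(a+1))) {0..u}"
    by (rule has_integral_mult_right[OF has_integral_powr_from_0]) (use assms in auto)
qed (use assms in auto)

lemma nakC_pos: "m > 0 \<Longrightarrow> nakC m > 0"
  by (simp add: nakC_def Gamma_real_pos)

lemma nak_cdf: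
  assumes P: "prob_space M" and m: "m > 0"
    and D: "distributed M lborel X (\<lambda>x. ennreal (nakagami_density m x))"
  shows "u \<ge> 0 \<Longrightarrow> measure M {\<omega>\<in>space M. X \<omega> < u} \<le> nakC m * u powr (2*m)"
    and "0 \<le> u \<Longrightarrow> u \<le> 1 \<Longrightarrow> nakC m * exp (-m) * u powr (2*m) \<le> measure M {\<omega>\<in>space M. X \<omega> < u}"
proof -
  interpret prob_space M by fact
  have G: "Gamma m > 0" using m by (simp add: Gamma_real_pos)
  define A where "A = 2 * m powr m / Gamma m"
  have A0: "A \<ge> 0" using G m by (simp add: A_def)
  have set: "{\<omega>\<in>space M. X \<omega> < u} = X -` {..<u} \<inter> space M" by auto
  have em: "emeasure M {\<omega>\<in>space M. X \<omega> < u} = (\<integral>\<^sup>+x. ennreal (nakagami_density m x) * indicator {..<u} x \<partial>lborel)"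
    unfolding set by (rule distributed_emeasure[OF D]) simp
  have key: "A * (u powr (2*m-1+1) / (2*m-1+1)) = nakC m * u powr (2*m)"
    using m G by (simp add: A_def nakC_def field_simps)
  { assume u: "u \<ge> 0"
    have "emeasure M {\<omega>\<in>space M. X \<omega> < u} \<le> (\<integral>\<^sup>+x. ennreal (indicator {0..u} x * (A * x powr (2*m-1))) \<partial>lborel)"
      unfolding em
    proof (rule nn_integral_mono)
      fix x :: real
      show "ennreal (nakagami_density m x) * indicator {..<u} x \<le> ennreal (indicator {0..u} x * (A * x powr (2*m-1)))"
      proof (cases "0 \<le> x \<and> x < u")
        case True
        have e: "exp (- m * x\<^sup>2) \<le> 1" using m by simp
        have "A * x powr (2*m-1) * exp (- m * x\<^sup>2) \<le> A * x powr (2*m-1)"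
          by (rule mult_left_le[OF e]) (use A0 in auto)
        then have "nakagami_density m x \<le> A * x powr (2*m-1)"
          using True unfolding nakagami_density_def A_def by simp
        then show ?thesis using True by (auto simp: indicator_def intro: ennreal_leI)
      next
        case False
        then show ?thesis by (auto simp: indicator_def nakagami_density_def)
      qed
    qed
    also have "\<dots> = ennreal (nakC m * u powr (2*m))"
      using powr_int_0[of "2*m-1" u A] u m A0 key by simp
    finally show "measure M {\<omega>\<in>space M. X \<omega> < u} \<le> nakC m * u powr (2*m)"
      using nakC_pos[OF m] by (simp add: emeasure_eq_measure ennreal_le_iff2) (smt (verit) measure_nonneg powr_ge_zero zero_le_mult_iff)
  }
  { assume u: "0 \<le> u" "u \<le> 1"
    have "ennreal (nakC m * exp (-m) * u powr (2*m)) = (\<integral>\<^sup>+x. ennreal (indicator {0..u} x * (A * exp (-m) * x powr (2*m-1))) \<partial>lborel)"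
    proof -
      have k2: "nakC m * exp (-m) * u powr (2*m) = A * exp (-m) * (u powr (2*m-1+1) / (2*m-1+1))"
        using arg_cong[OF key, of "\<lambda>z. exp (-m) * z"] by (simp add: algebra_simps)
      show ?thesis unfolding k2
        by (rule powr_int_0[symmetric]) (use m u A0 in auto)
    qed
    also have "\<dots> \<le> emeasure M {\<omega>\<in>space M. X \<omega> < u}"
      unfolding em
    proof (rule nn_integral_mono_AE)
      show "AE x in lborel. ennreal (indicator {0..u} x * (A * exp (-m) * x powr (2*m-1))) \<le> ennreal (nakagami_density m x) * indicator {..<u} x"
        using AE_lborel_singleton[of u]
      proof eventually_elim
        case (elim x)
        show ?case
        proof (cases "0 \<le> x \<and> x < u")
          case True
          have "exp (-m) \<le> exp (- m * x\<^sup>2)"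
            using True u m by (auto intro!: mult_left_le_one_le simp: power_le_one)
          then have "A * x powr (2*m-1) * exp (-m) \<le> A * x powr (2*m-1) * exp (- m * x\<^sup>2)"
            by (rule mult_left_mono) (use A0 in auto)
          then have "A * exp (-m) * x powr (2*m-1) \<le> nakagami_density m x"
            using True unfolding nakagami_density_def A_def by (simp add: ac_simps)
          then show ?thesis using True by (auto simp: indicator_def intro: ennreal_leI)
        next
          case False
          then show ?thesis using elim by (auto simp: indicator_def)
        qed
      qed
    qed
    finally show "nakC m * exp (-m) * u powr (2*m) \<le> measure M {\<omega>\<in>space M. X \<omega> < u}"
      by (simp add: emeasure_eq_measure)
  }
qed



lemma dyadic_exists:
  fixes y :: real assumes "0 < y" "y < 1"
  shows "\<exists>j::nat. 2 powr (- real (Suc j)) \<le> y \<and> y < 2 powr (- real j)"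
proof -
  obtain n where n: "(1/2::real)^n < y" using real_arch_pow_inv[of y "1/2"] assms by auto
  have e: "\<And>k. (2::real) powr (- real k) = (1/2)^k"
    by (simp add: powr_minus_divide powr_realpow power_one_over)
  have "\<exists>k<n. (\<forall>i\<le>k. \<not> 2 powr (- real i) \<le> y) \<and> 2 powr (- real (Suc k)) \<le> y"
    by (rule ex_least_nat_less) (use n assms in \<open>auto simp: e\<close>)
  then obtain k where "\<not> 2 powr (- real k) \<le> y" "2 powr (- real (Suc k)) \<le> y" by auto
  then show ?thesis by (intro exI[of _ k]) auto
qed

lemma pair_upper:
  fixes X Y :: "'a \<Rightarrow> real"
  assumes P: "prob_space M"
    and Xm: "X \<in> borel_measurable M" and Ym: "Y \<in> borel_measurable M"
    and X0: "\<And>\<omega>. X \<omega> \<ge> 0" and Y0: "\<And>\<omega>. Y \<omega> \<ge> 0"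
    and ind: "\<And>a b. measure M {\<omega>\<in>space M. X \<omega> < a \<and> Y \<omega> < b}
               = measure M {\<omega>\<in>space M. X \<omega> < a} * measure M {\<omega>\<in>space M. Y \<omega> < b}"
    and CX: "\<And>u. u \<ge> 0 \<Longrightarrow> measure M {\<omega>\<in>space M. X \<omega> < u} \<le> C1 * u powr p1"
    and CY: "\<And>u. u \<ge> 0 \<Longrightarrow> measure M {\<omega>\<in>space M. Y \<omega> < u} \<le> C2 * u powr p2"
    and p: "0 < p1" "p1 < p2" and C: "C1 \<ge> 0" "C2 \<ge> 0"
    and x: "x > 0"
  shows "measure M {\<omega>\<in>space M. X \<omega> * Y \<omega> < x}
           \<le> (C1 + C1 * C2 * 2 powr p1 / (1 - 2 powr (p1 - p2))) * x powr p1"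
proof -
  interpret prob_space M by fact
  define r where "r = (2::real) powr (p1 - p2)"
  have r: "0 < r" "r < 1" using p by (auto simp: r_def intro!: powr_less_one)
  define R where "R j = {\<omega>\<in>space M. Y \<omega> < 2 powr (- real j) \<and> X \<omega> < x * 2 powr (real (Suc j))}" for j :: nat
  define S0 where "S0 = {\<omega>\<in>space M. X \<omega> < x}"
  define S1 where "S1 = {\<omega>\<in>space M. Y \<omega> \<le> 0}"
  have cover: "{\<omega>\<in>space M. X \<omega> * Y \<omega> < x} \<subseteq> S0 \<union> S1 \<union> (\<Union>j. R j)"
  proof
    fix \<omega> assume w: "\<omega> \<in> {\<omega>\<in>space M. X \<omega> * Y \<omega> < x}"
    show "\<omega> \<in> S0 \<union> S1 \<union> (\<Union>j. R j)"
    proof (cases "Y \<omega> \<le> 0")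
      case True then show ?thesis using w by (auto simp: S1_def)
    next
      case False
      then have Yp: "Y \<omega> > 0" by simp
      show ?thesis
      proof (cases "Y \<omega> \<ge> 1")
        case True
        have "X \<omega> \<le> X \<omega> * Y \<omega>" using True X0[of \<omega>] by (simp add: mult_le_cancel_left1)
        then show ?thesis using w by (auto simp: S0_def)
      next
        case False
        then obtain j where j: "2 powr (- real (Suc j)) \<le> Y \<omega>" "Y \<omega> < 2 powr (- real j)"
          using dyadic_exists[of "Y \<omega>"] Yp by auto
        have "X \<omega> * 2 powr (- real (Suc j)) \<le> X \<omega> * Y \<omega>"
          using j X0[of \<omega>] by (simp add: mult_left_mono)
        also have "\<dots> < x" using w by simp
        finally have h: "X \<omega> * 2 powr (- real (Suc j)) < x" .
        have "2 powr (- real (Suc j)) = 1 / 2 powr (real (Suc j))" by (rule powr_minus_divide)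
        with h have "X \<omega> / 2 powr (real (Suc j)) < x" by simp
        then have "X \<omega> < x * 2 powr (real (Suc j))"
          by (simp add: divide_less_eq)
        then show ?thesis using w j by (auto simp: R_def)
      qed
    qed
  qed
  have meas: "S0 \<in> sets M" "S1 \<in> sets M" "\<And>j. R j \<in> sets M"
    unfolding S0_def S1_def R_def using Xm Ym by measurable
  have Rb: "measure M (R j) \<le> C1 * C2 * 2 powr p1 * x powr p1 * r ^ j" for j
  proof -
    have "measure M (R j) = measure M {\<omega>\<in>space M. X \<omega> < x * 2 powr (real (Suc j))} * measure M {\<omega>\<in>space M. Y \<omega> < 2 powr (- real j)}"
      unfolding R_def by (subst ind[symmetric]) (auto intro!: arg_cong[where f="measure M"])
    also have "\<dots> \<le> (C1 * (x * 2 powr (real (Suc j))) powr p1) * (C2 * (2 powr (- real j)) powr p2)"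
      by (intro mult_mono CX CY) (use x C in auto)
    also have "\<dots> = C1 * C2 * 2 powr p1 * x powr p1 * r ^ j"
    proof -
      have "(x * 2 powr (real (Suc j))) powr p1 = x powr p1 * 2 powr p1 * 2 powr (real j * p1)"
        using x by (simp add: powr_mult powr_powr powr_add algebra_simps)
      moreover have "(2 powr (- real j)) powr p2 = 2 powr (- (real j * p2))"
        by (simp add: powr_powr)
      moreover have "r ^ j = 2 powr (real j * p1) * 2 powr (- (real j * p2))"
        unfolding r_def by (simp add: powr_power powr_add[symmetric] algebra_simps)
      ultimately show ?thesis by (simp add: algebra_simps)
    qed
    finally show ?thesis .
  qed
  have S1b: "measure M S1 \<le> 0"
  proof (rule tendsto_le[OF trivial_limit_at_right_real])
    have "((\<lambda>u. C2 * u powr p2) \<longlongrightarrow> C2 * 0 powr p2) (at_right 0)"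
      by (intro tendsto_intros) (use p in \<open>auto intro: eventually_mono[OF eventually_at_right_less]\<close>)
    then show "((\<lambda>u. C2 * u powr p2) \<longlongrightarrow> 0) (at_right 0)" by simp
    show "((\<lambda>u. measure M S1) \<longlongrightarrow> measure M S1) (at_right 0)" by simp
    show "\<forall>\<^sub>F u in at_right 0. measure M S1 \<le> C2 * u powr p2"
      using eventually_at_right_less[of "0::real"]
    proof eventually_elim
      case (elim u)
      have "measure M S1 \<le> measure M {\<omega>\<in>space M. Y \<omega> < u}"
        by (rule finite_measure_mono) (use elim Ym in \<open>auto simp: S1_def\<close>)
      also have "\<dots> \<le> C2 * u powr p2" using CY elim by simp
      finally show ?case .
    qed
  qed
  have summ: "summable (\<lambda>j. C1 * C2 * 2 powr p1 * x powr p1 * r ^ j)"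
    using r by (intro summable_mult summable_geometric) auto
  have summR: "summable (\<lambda>j. measure M (R j))"
    by (rule summable_comparison_test[OF _ summ]) (use Rb in auto)
  have "measure M {\<omega>\<in>space M. X \<omega> * Y \<omega> < x} \<le> measure M (S0 \<union> S1 \<union> (\<Union>j. R j))"
    by (rule finite_measure_mono[OF cover]) (use meas in auto)
  also have "\<dots> \<le> measure M (S0 \<union> S1) + measure M (\<Union>j. R j)"
    by (rule measure_Un_le) (use meas in auto)
  also have "\<dots> \<le> (measure M S0 + measure M S1) + (\<Sum>j. measure M (R j))"
    by (intro add_mono measure_Un_le finite_measure_subadditive_countably summR) (use meas in auto)
  also have "(\<Sum>j. measure M (R j)) \<le> (\<Sum>j. C1 * C2 * 2 powr p1 * x powr p1 * r ^ j)"
    by (rule suminf_le[OF Rb summR summ])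
  also have "\<dots> = C1 * C2 * 2 powr p1 * x powr p1 * (1 / (1 - r))"
    using r by (simp add: suminf_mult suminf_geometric)
  also have "measure M S0 \<le> C1 * x powr p1" unfolding S0_def using CX x by simp
  finally show ?thesis using S1b unfolding r_def by (simp add: algebra_simps)
qed

lemma pair_lower:
  fixes X Y :: "'a \<Rightarrow> real"
  assumes P: "prob_space M"
    and Xm: "X \<in> borel_measurable M" and Ym: "Y \<in> borel_measurable M"
    and X0: "\<And>\<omega>. X \<omega> \<ge> 0" and Y0: "\<And>\<omega>. Y \<omega> \<ge> 0"
    and ind: "\<And>a b. measure M {\<omega>\<in>space M. X \<omega> < a \<and> Y \<omega> < b}
               = measure M {\<omega>\<in>space M. X \<omega> < a} * measure M {\<omega>\<in>space M. Y \<omega> < b}"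
  shows "measure M {\<omega>\<in>space M. X \<omega> < x} * measure M {\<omega>\<in>space M. Y \<omega> < 1}
           \<le> measure M {\<omega>\<in>space M. X \<omega> * Y \<omega> < x}"
proof -
  interpret prob_space M by fact
  have "measure M {\<omega>\<in>space M. X \<omega> < x \<and> Y \<omega> < 1} \<le> measure M {\<omega>\<in>space M. X \<omega> * Y \<omega> < x}"
  proof (rule finite_measure_mono)
    show "{\<omega>\<in>space M. X \<omega> < x \<and> Y \<omega> < 1} \<subseteq> {\<omega>\<in>space M. X \<omega> * Y \<omega> < x}"
    proof safe
      fix \<omega> assume "X \<omega> < x" "Y \<omega> < 1"
      moreover have "X \<omega> * Y \<omega> \<le> X \<omega>" using X0[of \<omega>] \<open>Y \<omega> < 1\<close> by (simp add: mult_left_le)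
      ultimately show "X \<omega> * Y \<omega> < x" by simp
    qed
    show "{\<omega>\<in>space M. X \<omega> * Y \<omega> < x} \<in> sets M" using Xm Ym by measurable
  qed
  then show ?thesis using ind by simp
qed



locale chsys = prob_space M for M :: "'a measure" +
  fixes N K :: nat and h :: "nat \<Rightarrow> 'a \<Rightarrow> complex" and G g :: "nat \<Rightarrow> nat \<Rightarrow> 'a \<Rightarrow> complex"
    and mh mG mg :: real
  assumes mpos: "mG \<ge> 1/2" "mg \<ge> 1/2" "mh \<ge> 1/2" and mne: "mG \<noteq> mg"
    and indep: "indep_vars (\<lambda>_. borel) (chan h G g) (chan_idx N K)"
    and dist_h: "\<And>i. i \<in> {1..N} \<Longrightarrow>
        distributed M lborel (\<lambda>\<omega>. cmod (h i \<omega>)) (\<lambda>x. ennreal (nakagami_density mh x))"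
    and dist_G: "\<And>i k. i \<in> {1..N} \<Longrightarrow> k \<in> {1..K} \<Longrightarrow>
        distributed M lborel (\<lambda>\<omega>. cmod (G i k \<omega>)) (\<lambda>x. ennreal (nakagami_density mG x))"
    and dist_g: "\<And>i k. i \<in> {1..N} \<Longrightarrow> k \<in> {1..K} \<Longrightarrow>
        distributed M lborel (\<lambda>\<omega>. cmod (g i k \<omega>)) (\<lambda>x. ennreal (nakagami_density mg x))"
begin

lemma rv_chan: "j \<in> chan_idx N K \<Longrightarrow> chan h G g j \<in> borel_measurable M"
  using indep unfolding indep_vars_def by auto

lemma idx_h: "i \<in> {1..N} \<Longrightarrow> CH i \<in> chan_idx N K" by (simp add: chan_idx_def)
lemma idx_G: "i \<in> {1..N} \<Longrightarrow> k \<in> {1..K} \<Longrightarrow> CG i k \<in> chan_idx N K"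
  unfolding chan_idx_def by (intro UnI1 UnI2 rev_image_eqI[of "(i,k)"]) auto
lemma idx_g: "i \<in> {1..N} \<Longrightarrow> k \<in> {1..K} \<Longrightarrow> Cg i k \<in> chan_idx N K"
  unfolding chan_idx_def by (intro UnI2 rev_image_eqI[of "(i,k)"]) auto

lemma meas_h: "i \<in> {1..N} \<Longrightarrow> h i \<in> borel_measurable M"
  using rv_chan[OF idx_h] by (auto simp: chan_def)
lemma meas_G: "i \<in> {1..N} \<Longrightarrow> k \<in> {1..K} \<Longrightarrow> G i k \<in> borel_measurable M"
  using rv_chan[OF idx_G] by (auto simp: chan_def)
lemma meas_g: "i \<in> {1..N} \<Longrightarrow> k \<in> {1..K} \<Longrightarrow> g i k \<in> borel_measurable M"
  using rv_chan[OF idx_g] by (auto simp: chan_def)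

definition W :: "nat \<times> nat \<Rightarrow> 'a \<Rightarrow> real" where
  "W j \<omega> = (if snd j = 0 then cmod (h (fst j) \<omega>)
            else cmod (G (fst j) (snd j) \<omega>) * cmod (g (fst j) (snd j) \<omega>))"

definition grp :: "nat \<times> nat \<Rightarrow> cidx set" where
  "grp j = (if snd j = 0 then {CH (fst j)} else {CG (fst j) (snd j), Cg (fst j) (snd j)})"

definition phi :: "nat \<times> nat \<Rightarrow> (cidx \<Rightarrow> complex) \<Rightarrow> real" where
  "phi j f = (if snd j = 0 then cmod (f (CH (fst j)))
            else cmod (f (CG (fst j) (snd j))) * cmod (f (Cg (fst j) (snd j))))"

lemma W_indep: "indep_vars (\<lambda>_. borel) W ({1..N} \<times> {0..K})"
proof -
  have 1: "indep_vars (\<lambda>j. PiM (grp j) (\<lambda>_. borel)) (\<lambda>j \<omega>. restrict (\<lambda>i. chan h G g i \<omega>) (grp j)) ({1..N} \<times> {0..K})"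
  proof (rule indep_vars_restrict[OF indep])
    show "grp j \<subseteq> chan_idx N K" if "j \<in> {1..N} \<times> {0..K}" for j
      using that by (auto simp: grp_def chan_idx_def)
    show "disjoint_family_on grp ({1..N} \<times> {0..K})"
      by (auto simp: disjoint_family_on_def grp_def split: if_splits)
  qed
  have 2: "indep_vars (\<lambda>_. borel) (\<lambda>j \<omega>. phi j (restrict (\<lambda>i. chan h G g i \<omega>) (grp j))) ({1..N} \<times> {0..K})"
  proof (rule indep_vars_compose2[OF 1])
    fix j assume "j \<in> {1..N} \<times> {0..K}"
    show "phi j \<in> PiM (grp j) (\<lambda>_. borel) \<rightarrow>\<^sub>M borel"
    proof (cases "snd j = 0")
      case True
      have "(\<lambda>f. f (CH (fst j))) \<in> PiM (grp j) (\<lambda>_. borel) \<rightarrow>\<^sub>M (borel :: complex measure)"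
        by (rule measurable_component_singleton) (use True in \<open>simp add: grp_def\<close>)
      then show ?thesis using True unfolding phi_def by simp
    next
      case False
      have "(\<lambda>f. f (CG (fst j) (snd j))) \<in> PiM (grp j) (\<lambda>_. borel) \<rightarrow>\<^sub>M (borel :: complex measure)"
        by (rule measurable_component_singleton) (use False in \<open>simp add: grp_def\<close>)
      moreover have "(\<lambda>f. f (Cg (fst j) (snd j))) \<in> PiM (grp j) (\<lambda>_. borel) \<rightarrow>\<^sub>M (borel :: complex measure)"
        by (rule measurable_component_singleton) (use False in \<open>simp add: grp_def\<close>)
      ultimately show ?thesis using False unfolding phi_def by simp
    qed
  qed
  show ?thesis
    by (rule iffD1[OF indep_vars_cong 2]) (auto simp: phi_def W_def grp_def chan_def fun_eq_iff)
qed

lemma pair_indep: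
  assumes "i \<in> {1..N}" "k \<in> {1..K}"
  shows "measure M {\<omega>\<in>space M. cmod (G i k \<omega>) < a \<and> cmod (g i k \<omega>) < c}
     = measure M {\<omega>\<in>space M. cmod (G i k \<omega>) < a} * measure M {\<omega>\<in>space M. cmod (g i k \<omega>) < c}"
proof -
  have 1: "indep_var (PiM {CG i k} (\<lambda>_. borel)) (\<lambda>\<omega>. restrict (\<lambda>j. chan h G g j \<omega>) {CG i k})
                     (PiM {Cg i k} (\<lambda>_. borel)) (\<lambda>\<omega>. restrict (\<lambda>j. chan h G g j \<omega>) {Cg i k})"
    by (rule indep_var_restrict[OF indep]) (use assms in \<open>auto simp: chan_idx_def\<close>)
  have 2: "indep_var borel ((\<lambda>f. cmod (f (CG i k))) \<circ> (\<lambda>\<omega>. restrict (\<lambda>j. chan h G g j \<omega>) {CG i k}))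
                     borel ((\<lambda>f. cmod (f (Cg i k))) \<circ> (\<lambda>\<omega>. restrict (\<lambda>j. chan h G g j \<omega>) {Cg i k}))"
    by (rule indep_var_compose[OF 1]) (auto intro!: measurable_compose[OF measurable_component_singleton])
  have 3: "indep_var borel (\<lambda>\<omega>. cmod (G i k \<omega>)) borel (\<lambda>\<omega>. cmod (g i k \<omega>))"
    using 2 by (simp add: comp_def chan_def)
  have "\<P>(x in M. cmod (G i k x) \<in> {..<a} \<and> cmod (g i k x) \<in> {..<c})
      = \<P>(x in M. cmod (G i k x) \<in> {..<a}) * \<P>(x in M. cmod (g i k x) \<in> {..<c})"
    by (rule prob_indep_random_variable[OF 3]) auto
  then show ?thesis by simp
qed

definition "m1 = min mG mg"
definition "m2 = max mG mg"
definition "CUp = nakC m1 + nakC m1 * nakC m2 * 2 powr (2*m1) / (1 - 2 powr (2*m1 - 2*m2))"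
definition "CU = max (nakC mh) CUp"
definition "CL = min (nakC mh * exp (-mh)) (nakC m1 * exp (-m1) * (nakC m2 * exp (-m2)))"
definition "pw j = (if snd j = 0 then 2*mh else 2*m1)"

lemma m12: "0 < m1" "m1 < m2" using mpos mne by (auto simp: m1_def m2_def)

lemma CL_pos: "CL > 0" using mpos m12 by (auto simp: CL_def nakC_pos m2_def)
lemma CU_pos: "CU > 0" using nakC_pos[of mh] mpos by (simp add: CU_def less_max_iff_disj)

lemma pair_up:
  assumes X: "distributed M lborel X (\<lambda>x. ennreal (nakagami_density m1 x))"
    and Y: "distributed M lborel Y (\<lambda>x. ennreal (nakagami_density m2 x))"
    and Xm: "X \<in> borel_measurable M" and Ym: "Y \<in> borel_measurable M"
    and X0: "\<And>\<omega>. X \<omega> \<ge> 0" and Y0: "\<And>\<omega>. Y \<omega> \<ge> 0"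
    and ind: "\<And>a b. measure M {\<omega>\<in>space M. X \<omega> < a \<and> Y \<omega> < b}
               = measure M {\<omega>\<in>space M. X \<omega> < a} * measure M {\<omega>\<in>space M. Y \<omega> < b}"
    and x: "x > 0"
  shows "measure M {\<omega>\<in>space M. X \<omega> * Y \<omega> < x} \<le> CUp * x powr (2*m1)"
  unfolding CUp_def
  by (rule pair_upper[OF prob_space_axioms Xm Ym X0 Y0 ind nak_cdf(1)[OF prob_space_axioms _ X]
        nak_cdf(1)[OF prob_space_axioms _ Y]]) (use m12 x in \<open>auto simp: nakC_pos less_imp_le\<close>)

lemma pair_lo:
  assumes X: "distributed M lborel X (\<lambda>x. ennreal (nakagami_density m1 x))"
    and Y: "distributed M lborel Y (\<lambda>x. ennreal (nakagami_density m2 x))"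
    and Xm: "X \<in> borel_measurable M" and Ym: "Y \<in> borel_measurable M"
    and X0: "\<And>\<omega>. X \<omega> \<ge> 0" and Y0: "\<And>\<omega>. Y \<omega> \<ge> 0"
    and ind: "\<And>a b. measure M {\<omega>\<in>space M. X \<omega> < a \<and> Y \<omega> < b}
               = measure M {\<omega>\<in>space M. X \<omega> < a} * measure M {\<omega>\<in>space M. Y \<omega> < b}"
    and x: "0 < x" "x \<le> 1"
  shows "CL * x powr (2*m1) \<le> measure M {\<omega>\<in>space M. X \<omega> * Y \<omega> < x}"
proof -
  have a: "nakC m1 * exp (-m1) * x powr (2*m1) \<le> measure M {\<omega>\<in>space M. X \<omega> < x}"
    by (rule nak_cdf(2)[OF prob_space_axioms _ X]) (use m12 x in auto)
  have b: "nakC m2 * exp (-m2) * 1 powr (2*m2) \<le> measure M {\<omega>\<in>space M. Y \<omega> < 1}"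
    by (rule nak_cdf(2)[OF prob_space_axioms _ Y]) (use m12 x in auto)
  have "CL * x powr (2*m1) \<le> (nakC m1 * exp (-m1) * x powr (2*m1)) * (nakC m2 * exp (-m2))"
  proof -
    have "CL \<le> nakC m1 * exp (-m1) * (nakC m2 * exp (-m2))" by (simp add: CL_def)
    from mult_right_mono[OF this, of "x powr (2*m1)"] show ?thesis by (simp add: algebra_simps)
  qed
  also have "\<dots> \<le> measure M {\<omega>\<in>space M. X \<omega> < x} * measure M {\<omega>\<in>space M. Y \<omega> < 1}"
    by (rule mult_mono[OF a]) (use b m12 in \<open>auto simp: nakC_pos less_imp_le\<close>)
  also have "\<dots> \<le> measure M {\<omega>\<in>space M. X \<omega> * Y \<omega> < x}"
    by (rule pair_lower[OF prob_space_axioms Xm Ym X0 Y0 ind])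
  finally show ?thesis .
qed

lemma W_bounds:
  assumes j: "j \<in> {1..N} \<times> {0..K}"
  shows "x > 0 \<Longrightarrow> measure M {\<omega>\<in>space M. W j \<omega> < x} \<le> CU * x powr pw j"
    and "0 < x \<Longrightarrow> x \<le> 1 \<Longrightarrow> CL * x powr pw j \<le> measure M {\<omega>\<in>space M. W j \<omega> < x}"
proof -
  obtain i k where ik: "j = (i,k)" "i \<in> {1..N}" "k \<in> {0..K}" using j by auto
  have mh0: "mh > 0" using mpos by simp
  { assume x: "x > 0"
    show "measure M {\<omega>\<in>space M. W j \<omega> < x} \<le> CU * x powr pw j"
    proof (cases "k = 0")
      case True
      have "measure M {\<omega>\<in>space M. W j \<omega> < x} \<le> nakC mh * x powr (2*mh)"
        using nak_cdf(1)[OF prob_space_axioms mh0 dist_h[OF ik(2)], of x] x True ik by (simp add: W_def)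
      also have "\<dots> \<le> CU * x powr pw j" using True ik by (auto simp: CU_def pw_def intro!: mult_right_mono)
      finally show ?thesis .
    next
      case False
      then have k: "k \<in> {1..K}" using ik by auto
      have "measure M {\<omega>\<in>space M. W j \<omega> < x} \<le> CUp * x powr (2*m1)"
      proof (cases "mG < mg")
        case True
        then have e: "m1 = mG" "m2 = mg" by (auto simp: m1_def m2_def)
        show ?thesis using pair_up[of "\<lambda>\<omega>. cmod (G i k \<omega>)" "\<lambda>\<omega>. cmod (g i k \<omega>)", unfolded e,
            OF dist_G[OF ik(2) k] dist_g[OF ik(2) k] _ _ _ _ pair_indep[OF ik(2) k] x]
            meas_G[OF ik(2) k] meas_g[OF ik(2) k] False ik e by (simp add: W_def)
      next
        case False
        then have e: "m1 = mg" "m2 = mG" using mne by (auto simp: m1_def m2_def)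
        have ind: "measure M {\<omega>\<in>space M. cmod (g i k \<omega>) < a \<and> cmod (G i k \<omega>) < c}
           = measure M {\<omega>\<in>space M. cmod (g i k \<omega>) < a} * measure M {\<omega>\<in>space M. cmod (G i k \<omega>) < c}" for a c
          using pair_indep[OF ik(2) k, of c a] by (simp add: conj_commute mult.commute)
        show ?thesis using pair_up[of "\<lambda>\<omega>. cmod (g i k \<omega>)" "\<lambda>\<omega>. cmod (G i k \<omega>)", unfolded e,
            OF dist_g[OF ik(2) k] dist_G[OF ik(2) k] _ _ _ _ ind x]
            meas_G[OF ik(2) k] meas_g[OF ik(2) k] \<open>k \<noteq> 0\<close> ik e by (simp add: W_def mult.commute)
      qed
      also have "\<dots> \<le> CU * x powr pw j" using False ik by (auto simp: CU_def pw_def intro!: mult_right_mono)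
      finally show ?thesis .
    qed
  }
  { assume x: "0 < x" "x \<le> 1"
    show "CL * x powr pw j \<le> measure M {\<omega>\<in>space M. W j \<omega> < x}"
    proof (cases "k = 0")
      case True
      have "CL * x powr pw j \<le> nakC mh * exp (-mh) * x powr (2*mh)"
        using True ik by (auto simp: CL_def pw_def intro!: mult_right_mono)
      also have "\<dots> \<le> measure M {\<omega>\<in>space M. W j \<omega> < x}"
        using nak_cdf(2)[OF prob_space_axioms mh0 dist_h[OF ik(2)], of x] x True ik by (simp add: W_def)
      finally show ?thesis .
    next
      case False
      then have k: "k \<in> {1..K}" using ik by auto
      have pwe: "pw j = 2*m1" using False ik by (simp add: pw_def)
      show ?thesis unfolding pwe
      proof (cases "mG < mg")
        case True
        then have e: "m1 = mG" "m2 = mg" by (auto simp: m1_def m2_def)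
        show "CL * x powr (2*m1) \<le> measure M {\<omega>\<in>space M. W j \<omega> < x}"
          using pair_lo[of "\<lambda>\<omega>. cmod (G i k \<omega>)" "\<lambda>\<omega>. cmod (g i k \<omega>)", unfolded e,
            OF dist_G[OF ik(2) k] dist_g[OF ik(2) k] _ _ _ _ pair_indep[OF ik(2) k] x]
            meas_G[OF ik(2) k] meas_g[OF ik(2) k] False ik e by (simp add: W_def)
      next
        case False
        then have e: "m1 = mg" "m2 = mG" using mne by (auto simp: m1_def m2_def)
        have ind: "measure M {\<omega>\<in>space M. cmod (g i k \<omega>) < a \<and> cmod (G i k \<omega>) < c}
           = measure M {\<omega>\<in>space M. cmod (g i k \<omega>) < a} * measure M {\<omega>\<in>space M. cmod (G i k \<omega>) < c}" for a c
          using pair_indep[OF ik(2) k, of c a] by (simp add: conj_commute mult.commute)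
        show "CL * x powr (2*m1) \<le> measure M {\<omega>\<in>space M. W j \<omega> < x}"
          using pair_lo[of "\<lambda>\<omega>. cmod (g i k \<omega>)" "\<lambda>\<omega>. cmod (G i k \<omega>)", unfolded e,
            OF dist_g[OF ik(2) k] dist_G[OF ik(2) k] _ _ _ _ ind x]
            meas_G[OF ik(2) k] meas_g[OF ik(2) k] \<open>k \<noteq> 0\<close> ik e by (simp add: W_def mult.commute)
      qed
    qed
  }
qed

end


lemma sorted_nth_less_iff:
  fixes xs :: "real list"
  assumes "sorted xs" "n < length xs"
  shows "xs ! n < a \<longleftrightarrow> Suc n \<le> length (filter (\<lambda>x. x < a) xs)"
  using assms
proof (induction xs arbitrary: n)
  case Nil then show ?case by simp
next
  case (Cons x xs)
  have ge: "\<forall>y\<in>set xs. x \<le> y" using Cons.prems(1) by simp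
  show ?case
  proof (cases "x < a")
    case True
    show ?thesis
    proof (cases n)
      case 0 then show ?thesis using True by simp
    next
      case (Suc n')
      then show ?thesis using Cons.IH[of n'] Cons.prems True by simp
    qed
  next
    case False
    have f: "filter (\<lambda>x. x < a) xs = []" using ge False by (auto simp: filter_empty_conv)
    have "\<not> (x # xs) ! n < a"
      using ge False Cons.prems(2) by (cases n) (auto, meson nth_mem order.trans not_less)
    then show ?thesis using f False by simp
  qed
qed

lemma order_stat_less_iff:
  assumes n: "n \<in> {1..N}"
  shows "order_stat N f n < a \<longleftrightarrow> n \<le> card {i\<in>{1..N}. f i < a}"
proof -
  let ?xs = "sort (map f [1..<Suc N])"
  have "order_stat N f n < a \<longleftrightarrow> Suc (n - 1) \<le> length (filter (\<lambda>x. x < a) ?xs)"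
    unfolding order_stat_def by (rule sorted_nth_less_iff) (use n in auto)
  also have "length (filter (\<lambda>x. x < a) ?xs) = length (filter (\<lambda>x. x < a) (map f [1..<Suc N]))"
    by (simp add: filter_sort)
  also have "\<dots> = length (filter (\<lambda>i. f i < a) [1..<Suc N])"
    by (simp add: filter_map comp_def)
  also have "\<dots> = card {i\<in>{1..N}. f i < a}"
    by (subst distinct_length_filter) (auto intro!: arg_cong[where f=card])
  finally show ?thesis using n by simp
qed

lemma order_stat_nonneg:
  assumes n: "n \<in> {1..N}" and f: "\<And>i. i \<in> {1..N} \<Longrightarrow> f i \<ge> 0"
  shows "order_stat N f n \<ge> 0"
proof -
  have "order_stat N f n \<in> set (sort (map f [1..<Suc N]))"
    unfolding order_stat_def by (rule nth_mem) (use n in auto)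
  then show ?thesis using f by auto
qed

lemma order_stat_sq_iff:
  assumes n: "n \<in> {1..N}" and f: "\<And>i. i \<in> {1..N} \<Longrightarrow> f i \<ge> 0" and t: "t > 0"
  shows "(order_stat N f n)\<^sup>2 < t \<longleftrightarrow> n \<le> card {i\<in>{1..N}. f i < sqrt t}"
proof -
  have 0: "order_stat N f n \<ge> 0" by (rule order_stat_nonneg[OF n f])
  have "(order_stat N f n)\<^sup>2 < t \<longleftrightarrow> order_stat N f n < sqrt t"
    using 0 t by (metis real_sqrt_abs real_sqrt_less_iff abs_of_nonneg real_less_rsqrt)
  then show ?thesis using order_stat_less_iff[OF n] by simp
qed

lemma qerr_bound:
  assumes "b \<ge> 2"
  shows "\<bar>qerr b \<theta>\<bar> \<le> pi / 4"
proof -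
  define D where "D = qstep b"
  have D: "0 < D" "D \<le> pi / 2"
  proof -
    have "(4::real) \<le> 2 ^ b" using power_increasing[OF assms, of "2::real"] by simp
    then show "0 < D" "D \<le> pi / 2" using pi_gt_zero
      by (auto simp: D_def qstep_def field_simps)
  qed
  define f where "f = real_of_int \<lfloor>\<theta> / D\<rfloor>"
  have "f \<le> \<theta> / D" "\<theta> / D < f + 1" unfolding f_def by linarith+
  then have "D * f \<le> \<theta>" "\<theta> < D * (f + 1)" using D by (auto simp: field_simps)
  then have "\<bar>D * (f + 1/2) - \<theta>\<bar> \<le> D / 2" unfolding abs_le_iff distrib_left by linarith
  then show ?thesis using D unfolding qerr_def D_def[symmetric] f_def[symmetric] by linarith
qed

lemma cos_qerr: "b \<ge> 2 \<Longrightarrow> cos (qerr b \<theta>) \<ge> 1/2"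
proof -
  assume b: "b \<ge> 2"
  have "cos (pi/3) \<le> cos \<bar>qerr b \<theta>\<bar>"
    by (rule cos_monotone_0_pi_le) (use qerr_bound[OF b, of \<theta>] pi_gt_zero in auto)
  then show ?thesis by (simp add: cos_60)
qed

lemma Zq_le_Zcont:
  assumes "0 \<le> \<beta>"
  shows "Zq b \<beta> K h G g \<le> Zcont \<beta> K h G g"
proof -
  let ?t = "\<lambda>k. complex_of_real (cmod (G k) * cmod (g k)) * cis (qerr b (Arg h - Arg (G k * g k)))"
  have "Zq b \<beta> K h G g \<le> cmod (complex_of_real (cmod h)) + cmod (complex_of_real \<beta> * (\<Sum>k=1..K. ?t k))"
    unfolding Zq_def by (rule norm_triangle_ineq)
  also have "cmod (complex_of_real \<beta> * (\<Sum>k=1..K. ?t k)) = \<beta> * cmod (\<Sum>k=1..K. ?t k)"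
    by (simp only: norm_mult norm_of_real abs_of_nonneg[OF assms])
  also have "\<dots> \<le> \<beta> * (\<Sum>k=1..K. cmod (?t k))"
    by (rule mult_left_mono[OF norm_sum assms])
  also have "(\<Sum>k=1..K. cmod (?t k)) = (\<Sum>k=1..K. cmod (G k) * cmod (g k))"
    by (simp add: norm_mult)
  finally show ?thesis by (simp add: Zcont_def)
qed

lemma Zq_Re:
  "Re (complex_of_real (cmod h) + complex_of_real \<beta> *
       (\<Sum>k=1..K. complex_of_real (cmod (G k) * cmod (g k)) * cis (qerr b (Arg h - Arg (G k * g k)))))
   = cmod h + \<beta> * (\<Sum>k=1..K. cmod (G k) * cmod (g k) * cos (qerr b (Arg h - Arg (G k * g k))))"
  by (simp add: sum_distrib_left)

lemma Zq_ge:
  assumes b: "b \<ge> 2" and \<beta>: "0 \<le> \<beta>"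
  shows "cmod h \<le> Zq b \<beta> K h G g"
    and "k \<in> {1..K} \<Longrightarrow> \<beta> * (cmod (G k) * cmod (g k)) / 2 \<le> Zq b \<beta> K h G g"
proof -
  let ?c = "\<lambda>k. cmod (G k) * cmod (g k) * cos (qerr b (Arg h - Arg (G k * g k)))"
  have c0: "\<And>k. cmod (G k) * cmod (g k) / 2 \<le> ?c k"
  proof -
    fix k
    have "cmod (G k) * cmod (g k) * (1/2) \<le> ?c k"
      by (rule mult_left_mono[OF cos_qerr[OF b]]) simp
    then show "cmod (G k) * cmod (g k) / 2 \<le> ?c k" by simp
  qed
  have c1: "\<And>k. 0 \<le> ?c k" using c0 by (rule order.trans[rotated]) simp
  have Re: "cmod h + \<beta> * (\<Sum>k=1..K. ?c k) \<le> Zq b \<beta> K h G g"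
    unfolding Zq_def Zq_Re[symmetric] by (rule complex_Re_le_cmod)
  have s0: "0 \<le> \<beta> * (\<Sum>k=1..K. ?c k)" using \<beta> c1 by (simp add: sum_nonneg)
  show "cmod h \<le> Zq b \<beta> K h G g" using Re s0 by linarith
  assume k: "k \<in> {1..K}"
  have "?c k \<le> (\<Sum>k=1..K. ?c k)" by (rule member_le_sum) (use k c1 in auto)
  then have "\<beta> * (cmod (G k) * cmod (g k) / 2) \<le> \<beta> * (\<Sum>k=1..K. ?c k)"
    using c0[of k] \<beta> by (intro mult_left_mono) auto
  then have "\<beta> * (cmod (G k) * cmod (g k) / 2) \<le> Zq b \<beta> K h G g"
    using Re norm_ge_zero[of h] by linarith
  then show "\<beta> * (cmod (G k) * cmod (g k)) / 2 \<le> Zq b \<beta> K h G g" by simp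
qed

lemma Zcont_lt:
  assumes \<beta>: "0 \<le> \<beta>" "\<beta> \<le> 1" and hs: "cmod h < s"
    and ks: "\<And>k. k \<in> {1..K} \<Longrightarrow> cmod (G k) * cmod (g k) < s"
  shows "Zcont \<beta> K h G g < (1 + real K) * s"
proof -
  have "(\<Sum>k=1..K. cmod (G k) * cmod (g k)) \<le> (\<Sum>k=1..K. s)"
    by (rule sum_mono) (use ks in \<open>auto intro: less_imp_le\<close>)
  then have S: "(\<Sum>k=1..K. cmod (G k) * cmod (g k)) \<le> real K * s" by simp
  have S0: "0 \<le> (\<Sum>k=1..K. cmod (G k) * cmod (g k))" by (simp add: sum_nonneg)
  have "\<beta> * (\<Sum>k=1..K. cmod (G k) * cmod (g k)) \<le> 1 * (\<Sum>k=1..K. cmod (G k) * cmod (g k))"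
    by (rule mult_right_mono) (use \<beta> S0 in auto)
  then show ?thesis using S hs unfolding Zcont_def by (simp add: algebra_simps)
qed



context chsys begin

definition pwk :: "nat \<Rightarrow> real" where "pwk k = (if k = 0 then 2*mh else 2*m1)"
lemma pw_eq: "pw j = pwk (snd j)" by (simp add: pw_def pwk_def)

definition "Sn n = {S. S \<subseteq> {1..N} \<and> card S = n}"
definition "Ev n Z s = {\<omega>\<in>space M. n \<le> card {i\<in>{1..N}. Z i \<omega> < (s::real)}}"

lemma Sn_finite: "finite (Sn n)"
  by (rule finite_subset[of _ "Pow {1..N}"]) (auto simp: Sn_def)

lemma Ev_eq:
  assumes n: "n \<in> {1..N}"
  shows "Ev n Z s = (\<Union>S\<in>Sn n. \<Inter>i\<in>S. {\<omega>\<in>space M. Z i \<omega> < s})"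
proof (intro equalityI subsetI)
  fix \<omega> assume w: "\<omega> \<in> Ev n Z s"
  then have "n \<le> card {i\<in>{1..N}. Z i \<omega> < s}" by (simp add: Ev_def)
  then obtain T where T: "T \<subseteq> {i\<in>{1..N}. Z i \<omega> < s}" "card T = n" by (rule obtain_subset_with_card_n)
  then have "T \<in> Sn n" "T \<noteq> {}" using n by (auto simp: Sn_def)
  then show "\<omega> \<in> (\<Union>S\<in>Sn n. \<Inter>i\<in>S. {\<omega>\<in>space M. Z i \<omega> < s})"
    using T w by (auto simp: Ev_def)
next
  fix \<omega> assume "\<omega> \<in> (\<Union>S\<in>Sn n. \<Inter>i\<in>S. {\<omega>\<in>space M. Z i \<omega> < s})"
  then obtain S where S: "S \<in> Sn n" "\<And>i. i \<in> S \<Longrightarrow> \<omega> \<in> space M \<and> Z i \<omega> < s" by auto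
  have Sne: "S \<noteq> {}" using S(1) n by (auto simp: Sn_def)
  then have w: "\<omega> \<in> space M" using S(2) by auto
  have "card S \<le> card {i\<in>{1..N}. Z i \<omega> < s}"
    by (rule card_mono) (use S in \<open>auto simp: Sn_def\<close>)
  then show "\<omega> \<in> Ev n Z s" using S(1) w by (simp add: Ev_def Sn_def)
qed

lemma Ev_meas:
  assumes n: "n \<in> {1..N}" and Zm: "\<And>i. i \<in> {1..N} \<Longrightarrow> Z i \<in> borel_measurable M"
  shows "Ev n Z s \<in> sets M"
  unfolding Ev_eq[OF n]
proof (intro sets.finite_UN Sn_finite ballI sets.finite_INT)
  fix S i assume "S \<in> Sn n" "i \<in> S"
  then have "i \<in> {1..N}" by (auto simp: Sn_def)
  then show "{\<omega> \<in> space M. Z i \<omega> < s} \<in> sets M" using Zm by measurable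
next
  fix S assume "S \<in> Sn n" then show "finite S" "S \<noteq> {}" using n
    by (auto simp: Sn_def intro: finite_subset[OF _ finite_atLeastAtMost])
qed

lemma W_meas: "j \<in> {1..N} \<times> {0..K} \<Longrightarrow> W j \<in> borel_measurable M"
  using W_indep unfolding indep_vars_def by auto

lemma prob_W_prod:
  assumes J: "J \<subseteq> {1..N} \<times> {0..K}" "J \<noteq> {}" "finite J"
  shows "prob (\<Inter>j\<in>J. W j -` {..<c j} \<inter> space M) = (\<Prod>j\<in>J. prob {\<omega>\<in>space M. W j \<omega> < c j})"
proof -
  have "prob (\<Inter>j\<in>J. W j -` {..<c j} \<inter> space M) = (\<Prod>j\<in>J. prob (W j -` {..<c j} \<inter> space M))"
    by (rule indep_varsD[OF W_indep]) (use J in auto)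
  also have "\<dots> = (\<Prod>j\<in>J. prob {\<omega>\<in>space M. W j \<omega> < c j})"
    by (intro prod.cong refl arg_cong[where f=prob]) auto
  finally show ?thesis .
qed

lemma Ev_upper:
  assumes n: "n \<in> {1..N}" and s: "s > 0" and cf: "\<And>k. cf k > 0"
    and Zup: "\<And>i \<omega> k. i \<in> {1..N} \<Longrightarrow> \<omega> \<in> space M \<Longrightarrow> Z i \<omega> < s \<Longrightarrow> k \<in> {0..K} \<Longrightarrow> W (i,k) \<omega> < cf k * s"
  shows "prob (Ev n Z s) \<le> real (card (Sn n)) * (\<Prod>k\<in>{0..K}. CU * (cf k * s) powr pwk k) ^ n"
proof -
  define B where "B S = (\<Inter>j\<in>S \<times> {0..K}. W j -` {..<cf (snd j) * s} \<inter> space M)" for S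
  have SS: "S \<subseteq> {1..N}" "S \<noteq> {}" "finite S" "card S = n" if "S \<in> Sn n" for S
    using that n by (auto simp: Sn_def intro: finite_subset[OF _ finite_atLeastAtMost])
  have BS: "B S \<in> sets M" if "S \<in> Sn n" for S
    unfolding B_def
  proof (intro sets.finite_INT)
    show "finite (S \<times> {0..K})" "S \<times> {0..K} \<noteq> {}" using SS[OF that] by auto
    fix j assume "j \<in> S \<times> {0..K}"
    then have "j \<in> {1..N} \<times> {0..K}" using SS[OF that] by auto
    then show "W j -` {..<cf (snd j) * s} \<inter> space M \<in> sets M"
      using W_meas by (auto intro: measurable_sets)
  qed
  have sub: "Ev n Z s \<subseteq> (\<Union>S\<in>Sn n. B S)"
    unfolding Ev_eq[OF n]
  proof
    fix \<omega> assume "\<omega> \<in> (\<Union>S\<in>Sn n. \<Inter>i\<in>S. {\<omega>\<in>space M. Z i \<omega> < s})"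
    then obtain S where S: "S \<in> Sn n" and w: "\<forall>i\<in>S. \<omega> \<in> space M \<and> Z i \<omega> < s" by auto
    have "\<omega> \<in> B S" unfolding B_def using Zup w SS[OF S] by auto
    then show "\<omega> \<in> (\<Union>S\<in>Sn n. B S)" using S by auto
  qed
  have "prob (Ev n Z s) \<le> prob (\<Union>S\<in>Sn n. B S)"
    by (rule finite_measure_mono[OF sub]) (use BS Sn_finite in auto)
  also have "\<dots> \<le> (\<Sum>S\<in>Sn n. prob (B S))"
    by (rule finite_measure_subadditive_finite[OF Sn_finite]) (use BS in auto)
  also have "\<dots> \<le> (\<Sum>S\<in>Sn n. (\<Prod>k\<in>{0..K}. CU * (cf k * s) powr pwk k) ^ n)"
  proof (rule sum_mono)
    fix S assume S: "S \<in> Sn n"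
    have "prob (B S) = (\<Prod>j\<in>S \<times> {0..K}. prob {\<omega>\<in>space M. W j \<omega> < cf (snd j) * s})"
      unfolding B_def by (rule prob_W_prod) (use SS[OF S] in auto)
    also have "\<dots> \<le> (\<Prod>j\<in>S \<times> {0..K}. CU * (cf (snd j) * s) powr pwk (snd j))"
    proof (rule prod_mono)
      fix j assume j: "j \<in> S \<times> {0..K}"
      then have "j \<in> {1..N} \<times> {0..K}" using SS[OF S] by auto
      then show "0 \<le> prob {\<omega>\<in>space M. W j \<omega> < cf (snd j) * s} \<and>
                 prob {\<omega>\<in>space M. W j \<omega> < cf (snd j) * s} \<le> CU * (cf (snd j) * s) powr pwk (snd j)"
        using W_bounds(1)[of j "cf (snd j) * s"] cf[of "snd j"] s by (simp add: pw_eq)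
    qed
    also have "\<dots> = (\<Prod>i\<in>S. \<Prod>k\<in>{0..K}. CU * (cf k * s) powr pwk k)"
      by (subst prod.cartesian_product) (simp add: case_prod_beta)
    also have "\<dots> = (\<Prod>k\<in>{0..K}. CU * (cf k * s) powr pwk k) ^ n"
      using SS[OF S] by simp
    finally show "prob (B S) \<le> (\<Prod>k\<in>{0..K}. CU * (cf k * s) powr pwk k) ^ n" .
  qed
  also have "\<dots> = real (card (Sn n)) * (\<Prod>k\<in>{0..K}. CU * (cf k * s) powr pwk k) ^ n"
    by simp
  finally show ?thesis .
qed

lemma Ev_lower:
  assumes n: "n \<in> {1..N}" and s': "0 < s'" "s' \<le> 1" and Em: "Ev n Z s \<in> sets M"
    and Zlo: "\<And>i \<omega>. i \<in> {1..N} \<Longrightarrow> \<omega> \<in> space M \<Longrightarrow> (\<forall>k\<in>{0..K}. W (i,k) \<omega> < s') \<Longrightarrow> Z i \<omega> < s"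
  shows "(\<Prod>k\<in>{0..K}. CL * s' powr pwk k) ^ n \<le> prob (Ev n Z s)"
proof -
  define B where "B = (\<Inter>j\<in>{1..n} \<times> {0..K}. W j -` {..<s'} \<inter> space M)"
  have sub: "B \<subseteq> Ev n Z s"
  proof
    fix \<omega> assume w: "\<omega> \<in> B"
    then have ws: "\<omega> \<in> space M" using n by (auto simp: B_def)
    have "{1..n} \<subseteq> {i\<in>{1..N}. Z i \<omega> < s}"
    proof
      fix i assume i: "i \<in> {1..n}"
      then have "i \<in> {1..N}" using n by auto
      moreover have "\<forall>k\<in>{0..K}. W (i,k) \<omega> < s'" using w i by (auto simp: B_def)
      ultimately show "i \<in> {i\<in>{1..N}. Z i \<omega> < s}" using Zlo ws by auto
    qed
    then have "card {1..n} \<le> card {i\<in>{1..N}. Z i \<omega> < s}" by (rule card_mono[rotated]) auto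
    then show "\<omega> \<in> Ev n Z s" using ws by (simp add: Ev_def)
  qed
  have "(\<Prod>k\<in>{0..K}. CL * s' powr pwk k) ^ n = (\<Prod>i\<in>{1..n}. \<Prod>k\<in>{0..K}. CL * s' powr pwk k)"
    by simp
  also have "\<dots> = (\<Prod>j\<in>{1..n} \<times> {0..K}. CL * s' powr pwk (snd j))"
    by (subst prod.cartesian_product) (simp add: case_prod_beta)
  also have "\<dots> \<le> (\<Prod>j\<in>{1..n} \<times> {0..K}. prob {\<omega>\<in>space M. W j \<omega> < s'})"
  proof (rule prod_mono)
    fix j assume j: "j \<in> {1..n} \<times> {0..K}"
    then have "j \<in> {1..N} \<times> {0..K}" using n by auto
    then show "0 \<le> CL * s' powr pwk (snd j) \<and> CL * s' powr pwk (snd j) \<le> prob {\<omega>\<in>space M. W j \<omega> < s'}"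
      using W_bounds(2)[of j s'] s' CL_pos by (simp add: pw_eq)
  qed
  also have "\<dots> = prob B"
    unfolding B_def by (rule prob_W_prod[symmetric]) (use n in auto)
  also have "\<dots> \<le> prob (Ev n Z s)" by (rule finite_measure_mono[OF sub Em])
  finally show ?thesis .
qed

end


lemma log_limit:
  fixes P :: "real \<Rightarrow> real"
  assumes A: "A > 0" and B: "B > 0"
    and ev: "\<forall>\<^sub>F \<rho> in at_top. A * \<rho> powr (-D) \<le> P \<rho> \<and> P \<rho> \<le> B * \<rho> powr (-D)"
  shows "((\<lambda>\<rho>. - ln (P \<rho>) / ln \<rho>) \<longlongrightarrow> D) at_top"
proof (rule tendsto_sandwich)
  have lnt: "filterlim (ln :: real \<Rightarrow> real) at_top at_top" by (rule ln_at_top)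
  have z: "((\<lambda>\<rho>. c / ln \<rho>) \<longlongrightarrow> 0) at_top" for c :: real
    by (rule tendsto_divide_0[OF tendsto_const filterlim_at_top_imp_at_infinity[OF lnt]])
  show "((\<lambda>\<rho>. D - ln B / ln \<rho>) \<longlongrightarrow> D) at_top"
    using tendsto_diff[OF tendsto_const z, of D "ln B"] by simp
  show "((\<lambda>\<rho>. D - ln A / ln \<rho>) \<longlongrightarrow> D) at_top"
    using tendsto_diff[OF tendsto_const z, of D "ln A"] by simp
  have ev2: "\<forall>\<^sub>F \<rho> in at_top. (A * \<rho> powr (-D) \<le> P \<rho> \<and> P \<rho> \<le> B * \<rho> powr (-D)) \<and> \<rho> > 1"
    using ev eventually_gt_at_top[of 1] by (rule eventually_conj)
  show "\<forall>\<^sub>F \<rho> in at_top. D - ln B / ln \<rho> \<le> - ln (P \<rho>) / ln \<rho>"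
    using ev2
  proof eventually_elim
    case (elim \<rho>)
    have l: "ln \<rho> > 0" using elim by simp
    have p: "P \<rho> > 0" using elim A by (smt (verit) mult_pos_pos powr_gt_zero)
    have "ln (P \<rho>) \<le> ln (B * \<rho> powr (-D))" using elim p by simp
    also have "\<dots> = ln B - D * ln \<rho>" using B elim by (simp add: ln_mult ln_powr)
    finally have "ln (P \<rho>) \<le> ln B - D * ln \<rho>" .
    then have "(D * ln \<rho> - ln B) / ln \<rho> \<le> - ln (P \<rho>) / ln \<rho>"
      using l by (intro divide_right_mono) auto
    moreover have "(D * ln \<rho> - ln B) / ln \<rho> = D - ln B / ln \<rho>" using l by (simp add: diff_divide_distrib)
    ultimately show ?case by simp
  qed
  show "\<forall>\<^sub>F \<rho> in at_top. - ln (P \<rho>) / ln \<rho> \<le> D - ln A / ln \<rho>"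
    using ev2
  proof eventually_elim
    case (elim \<rho>)
    have l: "ln \<rho> > 0" using elim by simp
    have "ln A - D * ln \<rho> = ln (A * \<rho> powr (-D))" using A elim by (simp add: ln_mult ln_powr)
    also have "\<dots> \<le> ln (P \<rho>)" using elim A by (intro ln_mono) auto
    finally have "ln A - D * ln \<rho> \<le> ln (P \<rho>)" .
    then have "- ln (P \<rho>) / ln \<rho> \<le> (D * ln \<rho> - ln A) / ln \<rho>"
      using l by (intro divide_right_mono) auto
    moreover have "(D * ln \<rho> - ln A) / ln \<rho> = D - ln A / ln \<rho>" using l by (simp add: diff_divide_distrib)
    ultimately show ?case by simp
  qed
qed

lemma prod_powr_split:
  fixes a :: "nat \<Rightarrow> real" and p :: "nat \<Rightarrow> real"
  assumes "\<And>k. a k \<ge> 0" "x > 0"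
  shows "(\<Prod>k\<in>I. C * (a k * x) powr p k) = (\<Prod>k\<in>I. C * a k powr p k) * x powr (\<Sum>k\<in>I. p k)"
  using assms by (simp add: powr_mult powr_sum prod.distrib mult.assoc)

lemma alg_powr:
  fixes T \<rho> C e :: real
  assumes "T > 0" "\<rho> > 0"
  shows "(C * sqrt (T/\<rho>) powr (2*e)) ^ n = C ^ n * T powr (real n * e) * \<rho> powr (- (real n * e))"
proof -
  have "sqrt (T/\<rho>) powr (2*e) = (T/\<rho>) powr e"
    using assms by (simp add: powr_half_sqrt[symmetric] powr_powr)
  moreover have "((T/\<rho>) powr e) ^ n = (T/\<rho>) powr (real n * e)"
    using assms by (simp add: powr_power)
  moreover have "(T/\<rho>) powr (real n * e) = T powr (real n * e) * \<rho> powr (- (real n * e))"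
    using assms by (simp add: powr_divide powr_minus_divide)
  ultimately show ?thesis by (simp add: power_mult_distrib)
qed

context chsys begin

lemma sum_pwk: "(\<Sum>k\<in>{0..K}. pwk k) = 2 * (mh + m1 * real K)"
proof -
  have "(\<Sum>k\<in>{0..K}. pwk k) = pwk 0 + (\<Sum>k\<in>{Suc 0..K}. pwk k)"
    by (subst sum.atLeast_Suc_atMost) auto
  also have "(\<Sum>k\<in>{Suc 0..K}. pwk k) = (\<Sum>k\<in>{Suc 0..K}. 2 * m1)"
    by (rule sum.cong) (auto simp: pwk_def)
  finally show ?thesis by (simp add: pwk_def algebra_simps)
qed

lemma Ev_asym:
  assumes n: "n \<in> {1..N}" and T: "T > 0" and cf: "\<And>k. cf k > 0"
    and Zm: "\<And>i. i \<in> {1..N} \<Longrightarrow> Z i \<in> borel_measurable M"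
    and Zup: "\<And>i \<omega> s k. i \<in> {1..N} \<Longrightarrow> \<omega> \<in> space M \<Longrightarrow> Z i \<omega> < s \<Longrightarrow> k \<in> {0..K} \<Longrightarrow> W (i,k) \<omega> < cf k * s"
    and Zlo: "\<And>i \<omega> s'. i \<in> {1..N} \<Longrightarrow> \<omega> \<in> space M \<Longrightarrow> (\<forall>k\<in>{0..K}. W (i,k) \<omega> < s') \<Longrightarrow> Z i \<omega> < (1 + real K) * s'"
  shows "\<exists>A B. A > 0 \<and> B > 0 \<and> (\<forall>\<^sub>F \<rho> in at_top.
     A * \<rho> powr (- (real n * (mh + m1 * real K))) \<le> prob (Ev n Z (sqrt (T/\<rho>))) \<and>
     prob (Ev n Z (sqrt (T/\<rho>))) \<le> B * \<rho> powr (- (real n * (mh + m1 * real K))))"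
proof -
  define e where "e = mh + m1 * real K"
  define D where "D = real n * e"
  define Cp where "Cp = (\<Prod>k\<in>{0..K}. CU * cf k powr pwk k)"
  define Cq where "Cq = (\<Prod>k\<in>{0..K}. CL * (1 / (1 + real K)) powr pwk k)"
  have Cp: "Cp > 0" unfolding Cp_def using CU_pos cf[THEN less_imp_neq, THEN not_sym] by (intro prod_pos mult_pos_pos) auto
  have Cq: "Cq > 0" unfolding Cq_def using CL_pos by (intro prod_pos) auto
  define A where "A = Cq ^ n * T powr D"
  define B where "B = (real (card (Sn n)) + 1) * Cp ^ n * T powr D"
  have A: "A > 0" using Cq T by (simp add: A_def)
  have B: "B > 0" using Cp T by (simp add: B_def)
  have sp: "(\<Sum>k\<in>{0..K}. pwk k) = 2 * e" by (simp add: sum_pwk e_def)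
  have ev: "\<forall>\<^sub>F \<rho> in at_top. A * \<rho> powr (-D) \<le> prob (Ev n Z (sqrt (T/\<rho>))) \<and>
     prob (Ev n Z (sqrt (T/\<rho>))) \<le> B * \<rho> powr (-D)"
    using eventually_ge_at_top[of T]
  proof eventually_elim
    case (elim \<rho>)
    have \<rho>: "\<rho> > 0" using elim T by simp
    define s where "s = sqrt (T/\<rho>)"
    have s: "s > 0" "s \<le> 1" using T \<rho> elim by (auto simp: s_def)
    have "prob (Ev n Z s) \<le> real (card (Sn n)) * (\<Prod>k\<in>{0..K}. CU * (cf k * s) powr pwk k) ^ n"
      by (rule Ev_upper[OF n s(1) cf Zup]) auto
    also have "(\<Prod>k\<in>{0..K}. CU * (cf k * s) powr pwk k) = Cp * s powr (2*e)"
      unfolding Cp_def sp[symmetric] by (rule prod_powr_split) (use cf s in \<open>auto intro: less_imp_le\<close>)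
    also have "(Cp * s powr (2*e)) ^ n = Cp ^ n * T powr D * \<rho> powr (-D)"
      unfolding s_def D_def by (rule alg_powr[OF T \<rho>])
    also have "real (card (Sn n)) * (Cp ^ n * T powr D * \<rho> powr (-D)) \<le> B * \<rho> powr (-D)"
    proof -
      have X0: "0 \<le> Cp ^ n * T powr D * \<rho> powr (-D)" using Cp by simp
      show ?thesis unfolding B_def
        using mult_right_mono[of "real (card (Sn n))" "real (card (Sn n)) + 1", OF _ X0] by (simp add: algebra_simps)
    qed
    finally have up: "prob (Ev n Z s) \<le> B * \<rho> powr (-D)" .
    have "A * \<rho> powr (-D) = (Cq * s powr (2*e)) ^ n"
      unfolding s_def D_def A_def using alg_powr[OF T \<rho>, of Cq e n] by simp
    also have "Cq * s powr (2*e) = (\<Prod>k\<in>{0..K}. CL * (1 / (1 + real K) * s) powr pwk k)"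
      unfolding Cq_def sp[symmetric] by (rule prod_powr_split[symmetric]) (use s in auto)
    also have "(\<Prod>k\<in>{0..K}. CL * (1 / (1 + real K) * s) powr pwk k) ^ n \<le> prob (Ev n Z s)"
    proof (rule Ev_lower[OF n])
      show "0 < 1 / (1 + real K) * s" using s by simp
      show "1 / (1 + real K) * s \<le> 1" using s by (simp add: field_simps)
      show "Ev n Z s \<in> sets M" by (rule Ev_meas[OF n Zm])
      fix i \<omega> assume "i \<in> {1..N}" "\<omega> \<in> space M" "\<forall>k\<in>{0..K}. W (i, k) \<omega> < 1 / (1 + real K) * s"
      from Zlo[OF this] show "Z i \<omega> < s" by simp
    qed
    finally show ?case using up by (simp add: s_def)
  qed
  then show ?thesis using A B unfolding D_def e_def by blast
qed

end



lemma Arg_meas[measurable]: "Arg \<in> borel_measurable borel"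
  unfolding Arg_def by measurable

lemma cis_meas[measurable]: "cis \<in> borel_measurable borel"
proof -
  have "cis = (\<lambda>x. exp (\<i> * complex_of_real x))" by (auto simp: cis_conv_exp fun_eq_iff)
  moreover have "(\<lambda>x. exp (\<i> * complex_of_real x)) \<in> borel_measurable borel"
    by (intro borel_measurable_continuous_onI continuous_intros)
  ultimately show ?thesis by simp
qed

declare borel_measurable_real_floor[measurable]

lemma rho_max_scale:
  assumes "\<rho> > 0" "n \<ge> 1"
  shows "rho_max \<alpha> R N \<rho> n = rho_max \<alpha> R N 1 n / \<rho>"
proof -
  have e: "rho_tilde \<alpha> R N \<rho> n l = rho_tilde \<alpha> R N 1 n l / \<rho>" for l
    by (simp add: rho_tilde_def divide_divide_eq_left mult.commute)
  have "rho_max \<alpha> R N \<rho> n = Max ((\<lambda>x. x / \<rho>) ` (rho_tilde \<alpha> R N 1 n ` {1..n}))"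
    unfolding rho_max_def e image_image ..
  also have "\<dots> = Max (rho_tilde \<alpha> R N 1 n ` {1..n}) / \<rho>"
    by (rule mono_Max_commute[symmetric]) (use assms in \<open>auto simp: mono_def divide_right_mono\<close>)
  finally show ?thesis by (simp add: rho_max_def)
qed

lemma rho_max_pos:
  assumes n: "n \<in> {1..N}"
    and R_pos: "\<And>l. l \<in> {1..N} \<Longrightarrow> 0 < R l"
    and alpha_pos: "\<And>i. i \<in> {1..N} \<Longrightarrow> 0 < \<alpha> i"
    and feasible: "\<And>l. 1 \<le> l \<Longrightarrow> l \<le> N - 1 \<Longrightarrow> \<alpha> l - gam R l * (\<Sum>i=l+1..N. \<alpha> i) > 0"
  shows "rho_max \<alpha> R N 1 n > 0"
proof -
  have g: "gam R l > 0" if "l \<in> {1..N}" for l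
    using R_pos[OF that] powr_less_mono[of 0 "R l" 2] by (simp add: gam_def)
  have p: "rho_tilde \<alpha> R N 1 n 1 > 0"
  proof (cases "(1, n) = (N, N)")
    case True
    then show ?thesis using g[of N] alpha_pos[of N] n by (simp add: rho_tilde_def)
  next
    case False
    then have "1 \<le> N - 1" using n by auto
    then show ?thesis using False g[of 1] feasible[of 1] n by (simp add: rho_tilde_def)
  qed
  have "rho_tilde \<alpha> R N 1 n 1 \<le> rho_max \<alpha> R N 1 n"
    unfolding rho_max_def by (rule Max_ge) (use n in auto)
  then show ?thesis using p by simp
qed



theorem corollary3:
  fixes M :: "'a measure" and N K b n :: nat and \<beta> mG mg mh :: real
    and h :: "nat \<Rightarrow> 'a \<Rightarrow> complex" and G g :: "nat \<Rightarrow> nat \<Rightarrow> 'a \<Rightarrow> complex"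
    and \<alpha> R :: "nat \<Rightarrow> real"
  assumes "prob_space M"
    and "N \<ge> 1" and "K \<ge> 1" and "b \<ge> 2" and "0 < \<beta>" and "\<beta> \<le> 1"
    and "mG \<ge> 1/2" and "mg \<ge> 1/2" and "mh \<ge> 1/2" and "mG \<noteq> mg"
    and indep: "prob_space.indep_vars M (\<lambda>_. borel) (chan h G g) (chan_idx N K)"
    and dist_h: "\<And>i. i \<in> {1..N} \<Longrightarrow>
        distributed M lborel (\<lambda>\<omega>. cmod (h i \<omega>)) (\<lambda>x. ennreal (nakagami_density mh x))"
    and dist_G: "\<And>i k. i \<in> {1..N} \<Longrightarrow> k \<in> {1..K} \<Longrightarrow>
        distributed M lborel (\<lambda>\<omega>. cmod (G i k \<omega>)) (\<lambda>x. ennreal (nakagami_density mG x))"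
    and dist_g: "\<And>i k. i \<in> {1..N} \<Longrightarrow> k \<in> {1..K} \<Longrightarrow>
        distributed M lborel (\<lambda>\<omega>. cmod (g i k \<omega>)) (\<lambda>x. ennreal (nakagami_density mg x))"
    and alpha_dec: "\<And>i j. 1 \<le> i \<Longrightarrow> i < j \<Longrightarrow> j \<le> N \<Longrightarrow> \<alpha> j < \<alpha> i"
    and alpha_pos: "\<And>i. i \<in> {1..N} \<Longrightarrow> 0 < \<alpha> i"
    and alpha_sum: "(\<Sum>i=1..N. \<alpha> i) = 1"
    and R_pos: "\<And>l. l \<in> {1..N} \<Longrightarrow> 0 < R l"
    and feasible: "\<And>l. 1 \<le> l \<Longrightarrow> l \<le> N - 1 \<Longrightarrow> \<alpha> l - gam R l * (\<Sum>i=l+1..N. \<alpha> i) > 0"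
    and "n \<in> {1..N}"
  shows "((\<lambda>\<rho>. - ln (outage_b M b \<beta> K N h G g \<alpha> R n \<rho>) / ln \<rho>)
            \<longlongrightarrow> real n * (mh + min mG mg * real K)) at_top
       \<and> ((\<lambda>\<rho>. - ln (outage_c M \<beta> K N h G g \<alpha> R n \<rho>) / ln \<rho>)
            \<longlongrightarrow> real n * (mh + min mG mg * real K)) at_top"
proof -
  note n = \<open>n \<in> {1..N}\<close>
  interpret chsys M N K h G g mh mG mg
    using assms(1,7-14) by - (intro chsys.intro chsys_axioms.intro, assumption+)
  define Zb where "Zb i \<omega> = Zq b \<beta> K (h i \<omega>) (\<lambda>k. G i k \<omega>) (\<lambda>k. g i k \<omega>)" for i \<omega>
  define Zc where "Zc i \<omega> = Zcont \<beta> K (h i \<omega>) (\<lambda>k. G i k \<omega>) (\<lambda>k. g i k \<omega>)" for i \<omega>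
  define cf where "cf k = (if k = 0 then 1 else 2 / \<beta>)" for k :: nat
  define T where "T = rho_max \<alpha> R N 1 n"
  have T: "T > 0" unfolding T_def by (rule rho_max_pos[OF n R_pos alpha_pos feasible])
  have cf: "cf k > 0" for k using \<open>0 < \<beta>\<close> by (simp add: cf_def)
  have b0: "0 \<le> \<beta>" using \<open>0 < \<beta>\<close> by simp
  have bc: "Zb i \<omega> \<le> Zc i \<omega>" for i \<omega> unfolding Zb_def Zc_def by (rule Zq_le_Zcont[OF b0])
  have Zb0: "0 \<le> Zb i \<omega>" for i \<omega> unfolding Zb_def Zq_def by simp
  have Zc0: "0 \<le> Zc i \<omega>" for i \<omega> using bc Zb0 order.trans by blast
  have Zbm: "Zb i \<in> borel_measurable M" if i: "i \<in> {1..N}" for i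
  proof -
    note [measurable] = meas_h[OF i]
    have [measurable]: "(\<lambda>\<omega>. \<Sum>k=1..K. complex_of_real (cmod (G i k \<omega>) * cmod (g i k \<omega>)) *
                   cis (qerr b (Arg (h i \<omega>) - Arg (G i k \<omega> * g i k \<omega>)))) \<in> borel_measurable M"
    proof (rule borel_measurable_sum)
      fix k assume k: "k \<in> {1..K}"
      note [measurable] = meas_G[OF i k] meas_g[OF i k]
      show "(\<lambda>\<omega>. complex_of_real (cmod (G i k \<omega>) * cmod (g i k \<omega>)) *
                   cis (qerr b (Arg (h i \<omega>) - Arg (G i k \<omega> * g i k \<omega>)))) \<in> borel_measurable M"
        unfolding qerr_def qstep_def by measurable
    qed
    show ?thesis unfolding Zb_def Zq_def by measurable
  qed
  have Zcm: "Zc i \<in> borel_measurable M" if i: "i \<in> {1..N}" for i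
  proof -
    note [measurable] = meas_h[OF i]
    have [measurable]: "(\<lambda>\<omega>. \<Sum>k=1..K. cmod (G i k \<omega>) * cmod (g i k \<omega>)) \<in> borel_measurable M"
    proof (rule borel_measurable_sum)
      fix k assume k: "k \<in> {1..K}"
      note [measurable] = meas_G[OF i k] meas_g[OF i k]
      show "(\<lambda>\<omega>. cmod (G i k \<omega>) * cmod (g i k \<omega>)) \<in> borel_measurable M" by measurable
    qed
    show ?thesis unfolding Zc_def Zcont_def by measurable
  qed
  have upb: "W (i,k) \<omega> < cf k * s" if "Zb i \<omega> < s" "k \<in> {0..K}" for i \<omega> s k
  proof (cases "k = 0")
    case True
    then show ?thesis using Zq_ge(1)[OF \<open>b \<ge> 2\<close> b0, where h="h i \<omega>" and K=K and G="\<lambda>k. G i k \<omega>" and g="\<lambda>k. g i k \<omega>"] that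
      by (simp add: W_def cf_def Zb_def)
  next
    case False
    then have k: "k \<in> {1..K}" using that by auto
    have "\<beta> * (cmod (G i k \<omega>) * cmod (g i k \<omega>)) / 2 < s"
      using Zq_ge(2)[OF \<open>b \<ge> 2\<close> b0 k, where h="h i \<omega>" and G="\<lambda>k. G i k \<omega>" and g="\<lambda>k. g i k \<omega>"] that by (simp add: Zb_def)
    then show ?thesis using False \<open>0 < \<beta>\<close> by (simp add: W_def cf_def field_simps)
  qed
  have lo: "Zc i \<omega> < (1 + real K) * s'" if "\<forall>k\<in>{0..K}. W (i,k) \<omega> < s'" for i \<omega> s'
  proof -
    have "cmod (h i \<omega>) < s'" using bspec[OF that, of 0] by (simp add: W_def)
    moreover have "cmod (G i k \<omega>) * cmod (g i k \<omega>) < s'" if "k \<in> {1..K}" for k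
      using bspec[OF \<open>\<forall>k\<in>{0..K}. W (i,k) \<omega> < s'\<close>, of k] that by (simp add: W_def)
    ultimately show ?thesis unfolding Zc_def by (rule Zcont_lt[OF b0 \<open>\<beta> \<le> 1\<close>])
  qed
  have m1e: "min mG mg = m1" by (simp add: m1_def)
  have ob: "outage_b M b \<beta> K N h G g \<alpha> R n \<rho> = prob (Ev n Zb (sqrt (T/\<rho>)))" if "\<rho> > 0" for \<rho>
  proof -
    have t: "rho_max \<alpha> R N \<rho> n = T / \<rho>" unfolding T_def by (rule rho_max_scale) (use that n in auto)
    show ?thesis unfolding outage_b_def Ev_def t Zb_def[symmetric]
      by (subst order_stat_sq_iff[OF n]) (use Zb0 T that in auto)
  qed
  have oc: "outage_c M \<beta> K N h G g \<alpha> R n \<rho> = prob (Ev n Zc (sqrt (T/\<rho>)))" if "\<rho> > 0" for \<rho>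
  proof -
    have t: "rho_max \<alpha> R N \<rho> n = T / \<rho>" unfolding T_def by (rule rho_max_scale) (use that n in auto)
    show ?thesis unfolding outage_c_def Ev_def t Zc_def[symmetric]
      by (subst order_stat_sq_iff[OF n]) (use Zc0 T that in auto)
  qed
  have ex1: "\<exists>A B. A > 0 \<and> B > 0 \<and> (\<forall>\<^sub>F \<rho> in at_top.
     A * \<rho> powr (- (real n * (mh + m1 * real K))) \<le> prob (Ev n Zb (sqrt (T/\<rho>))) \<and>
     prob (Ev n Zb (sqrt (T/\<rho>))) \<le> B * \<rho> powr (- (real n * (mh + m1 * real K))))"
  proof (rule Ev_asym[OF n T cf Zbm])
    show "W (i, k) \<omega> < cf k * s" if "Zb i \<omega> < s" "k \<in> {0..K}" for i \<omega> s k using upb that .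
    show "Zb i \<omega> < (1 + real K) * s'" if "\<forall>k\<in>{0..K}. W (i, k) \<omega> < s'" for i \<omega> s'
      using bc[of i \<omega>] lo[OF that] by linarith
  qed
  have ex2: "\<exists>A B. A > 0 \<and> B > 0 \<and> (\<forall>\<^sub>F \<rho> in at_top.
     A * \<rho> powr (- (real n * (mh + m1 * real K))) \<le> prob (Ev n Zc (sqrt (T/\<rho>))) \<and>
     prob (Ev n Zc (sqrt (T/\<rho>))) \<le> B * \<rho> powr (- (real n * (mh + m1 * real K))))"
  proof (rule Ev_asym[OF n T cf Zcm])
    show "W (i, k) \<omega> < cf k * s" if "Zc i \<omega> < s" "k \<in> {0..K}" for i \<omega> s k
      using bc[of i \<omega>] that by (intro upb) auto
    show "Zc i \<omega> < (1 + real K) * s'" if "\<forall>k\<in>{0..K}. W (i, k) \<omega> < s'" for i \<omega> s'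
      using lo[OF that] .
  qed
  obtain A1 B1 where AB1: "A1 > 0" "B1 > 0" "\<forall>\<^sub>F \<rho> in at_top.
     A1 * \<rho> powr (- (real n * (mh + m1 * real K))) \<le> prob (Ev n Zb (sqrt (T/\<rho>))) \<and>
     prob (Ev n Zb (sqrt (T/\<rho>))) \<le> B1 * \<rho> powr (- (real n * (mh + m1 * real K)))"
    using ex1 by blast
  obtain A2 B2 where AB2: "A2 > 0" "B2 > 0" "\<forall>\<^sub>F \<rho> in at_top.
     A2 * \<rho> powr (- (real n * (mh + m1 * real K))) \<le> prob (Ev n Zc (sqrt (T/\<rho>))) \<and>
     prob (Ev n Zc (sqrt (T/\<rho>))) \<le> B2 * \<rho> powr (- (real n * (mh + m1 * real K)))"
    using ex2 by blast
  have L1: "((\<lambda>\<rho>. - ln (prob (Ev n Zb (sqrt (T/\<rho>)))) / ln \<rho>) \<longlongrightarrow> real n * (mh + m1 * real K)) at_top"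
    by (rule log_limit[OF AB1])
  have L2: "((\<lambda>\<rho>. - ln (prob (Ev n Zc (sqrt (T/\<rho>)))) / ln \<rho>) \<longlongrightarrow> real n * (mh + m1 * real K)) at_top"
    by (rule log_limit[OF AB2])
  have E1: "\<forall>\<^sub>F \<rho> in at_top. - ln (outage_b M b \<beta> K N h G g \<alpha> R n \<rho>) / ln \<rho> = - ln (prob (Ev n Zb (sqrt (T/\<rho>)))) / ln \<rho>"
    using eventually_gt_at_top[of 0] by eventually_elim (simp add: ob)
  have E2: "\<forall>\<^sub>F \<rho> in at_top. - ln (outage_c M \<beta> K N h G g \<alpha> R n \<rho>) / ln \<rho> = - ln (prob (Ev n Zc (sqrt (T/\<rho>)))) / ln \<rho>"
    using eventually_gt_at_top[of 0] by eventually_elim (simp add: oc)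
  show ?thesis unfolding m1e
    using tendsto_cong[OF E1] tendsto_cong[OF E2] L1 L2 by blast
qed


end
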